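(* Let $(g_d)_{d\ge1}$ be a sequence of integer-valued functions on the positive integers such that $g_1(n)=0$ for all $n\ge1$ and $g_d(n)=g_d(\operatorname{rad}(n))$ for all $n\ge1$ and all $d\mid n$. Then the integer sequence $a_n=\sum_{d\mid n} d\,\mu(d)\,g_d(n)$ is an Euler–Gauss sequence. In particular, for an arbitrary sequence $(f_p)$, indexed by primes $p$, of integer-valued functions on the positive integers, the sequence $a_n=\sum_{p\mid n,\ p\text{ prime}} p\, f_p(\operatorname{rad}(n))$ is an Euler–Gauss sequence.
   Context: $\mu$ is the Möbius function and $\operatorname{rad}(n)=\prod_{p\mid n,\,p\text{ prime}}p$ (with $\operatorname{rad}(1)=1$). For an integer sequence $(a_n)$ and $n\ge1$, $A_n^+=\prod_{d\mid n,\ \mu(d)=1} a_{n/d}$ and $A_n^-=\prod_{d\mid n,\ \mu(d)=-1} a_{n/d}$ (empty products equal $1$). An Euler–Gauss sequence is an integer sequence with $A_n^+\equiv A_n^-\pmod n$ for all $n\ge1$. *)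

theory Defs
  imports "HOL-Computational_Algebra.Computational_Algebra" "HOL-Number_Theory.Number_Theory"
begin

definition mu :: "nat \<Rightarrow> int" where
  "mu n = (if n = 0 then 0 else if squarefree n then (-1) ^ card (prime_factors n) else 0)"

definition rad :: "nat \<Rightarrow> nat" where
  "rad n = (\<Prod>p\<in>prime_factors n. p)"

definition A_plus :: "(nat \<Rightarrow> int) \<Rightarrow> nat \<Rightarrow> int" where
  "A_plus a n = (\<Prod>d\<in>{d. d dvd n \<and> mu d = 1}. a (n div d))"

definition A_minus :: "(nat \<Rightarrow> int) \<Rightarrow> nat \<Rightarrow> int" where
  "A_minus a n = (\<Prod>d\<in>{d. d dvd n \<and> mu d = -1}. a (n div d))"

definition euler_gauss :: "(nat \<Rightarrow> int) \<Rightarrow> bool" where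
  "euler_gauss a \<longleftrightarrow> (\<forall>n\<ge>1. [A_plus a n = A_minus a n] (mod int n))"

end

theory Submission
  imports Defs
begin

lemma sqf_pos: "squarefree (n::nat) \<Longrightarrow> n > 0" by (cases n) auto

lemma pf_mult_prime:
  assumes "prime (p::nat)" "d > 0" "\<not> p dvd d"
  shows "prime_factors (d*p) = insert p (prime_factors d)" "p \<notin> prime_factors d"
proof -
  show "prime_factors (d*p) = insert p (prime_factors d)"
    using assms by (subst prime_factors_product) (auto simp: prime_factorization_prime)
  show "p \<notin> prime_factors d" using assms by (auto simp: prime_factors_dvd)
qed

lemma sqf_mult_prime:
  assumes "prime (p::nat)" "d > 0" "\<not> p dvd d"
  shows "squarefree (d*p) \<longleftrightarrow> squarefree d"
proof
  assume "squarefree (d*p)" thus "squarefree d" using squarefree_mono by (metis dvd_triv_left)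
next
  assume "squarefree d"
  moreover have "coprime d p" using assms by (metis coprime_commute prime_imp_coprime)
  ultimately show "squarefree (d*p)" using assms squarefree_mult_coprime squarefree_prime by blast
qed

lemma mu_mult_prime:
  assumes "prime (p::nat)" "d > 0" "\<not> p dvd d"
  shows "mu (d*p) = - mu d"
proof -
  have "d * p \<noteq> 0" using assms prime_gt_0_nat by auto
  moreover have "finite (prime_factors d)" by simp
  ultimately show ?thesis using assms pf_mult_prime[OF assms] sqf_mult_prime[OF assms]
    using sqf_pos by (auto simp: mu_def)
qed

lemma sqf_prod_pf:
  assumes "squarefree (n::nat)"
  shows "(\<Prod>p\<in>prime_factors n. p) = n"
proof -
  have n0: "n \<noteq> 0" using assms sqf_pos by blast
  have "(\<Prod>p\<in>prime_factors n. p) = (\<Prod>p\<in>prime_factors n. p ^ multiplicity p n)"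
    using assms n0 by (intro prod.cong) (auto simp: squarefree_factorial_semiring')
  also have "\<dots> = n" using prod_prime_factors[OF n0] by simp
  finally show ?thesis .
qed

lemma mu_nonsqf: "\<not> squarefree n \<Longrightarrow> mu n = 0" by (simp add: mu_def)
lemma mu_pm: "squarefree n \<Longrightarrow> mu n = 1 \<or> mu n = -1"
  using sqf_pos by (auto simp: mu_def minus_one_power_iff)




lemma nonsqf_step:
  fixes a :: "nat \<Rightarrow> int"
  assumes ap: "\<And>q m. prime q \<Longrightarrow> q dvd m \<Longrightarrow> m > 0 \<Longrightarrow> a (q*m) = a m"
    and p: "prime p" and n: "n \<ge> 1" and p2: "p^2 dvd n"
    and s: "s = 1 \<or> s = -1"
    and d: "d dvd n" "mu d = s"
    and h_def: "h = (\<lambda>d. if p dvd d then d div p else d*p)"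
  shows "h d dvd n \<and> mu (h d) = - s \<and> h (h d) = d \<and> a (n div h d) = a (n div d)"
proof -
  have sq: "squarefree d" using d s mu_nonsqf by fastforce
  have d0: "d > 0" using sq sqf_pos by blast
  have p0: "p > 0" using p prime_gt_0_nat by blast
  obtain k where k: "n = d * k" using d by blast
  have k0: "k > 0" using k n by (cases k) auto
  show ?thesis
  proof (cases "p dvd d")
    case True
    then obtain e where e: "d = p * e" by blast
    have e0: "e > 0" using e d0 by (cases e) auto
    have ne: "\<not> p dvd e"
    proof
      assume "p dvd e"
      then have "p^2 dvd d" using e by (auto simp: power2_eq_square)
      then have "p dvd 1" using sq squarefreeD by blast
      then show False using p by auto
    qed
    have hd: "h d = e" using True e p0 by (simp add: h_def)
    have hhd: "h e = d" using ne e by (simp add: h_def mult.commute)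
    have mue: "mu e = - s" using mu_mult_prime[OF p e0 ne] d e by (simp add: mult.commute)
    have pk: "p dvd k"
    proof -
      have "p * p dvd p * (e * k)" using p2 k e by (simp add: power2_eq_square mult.assoc)
      then have "p dvd e * k" using p0 by simp
      then show ?thesis using ne p by (simp add: prime_dvd_mult_iff)
    qed
    have "n div e = p * k" using k e e0 by simp
    moreover have "n div d = k" using k d0 by simp
    ultimately have X: "a (n div e) = a (n div d)" using ap[OF p pk k0] by simp
    have Y: "e dvd n" using k e by simp
    show ?thesis unfolding hd hhd mue using X Y by blast
  next
    case False
    have hd: "h d = d * p" using False by (simp add: h_def)
    have hhd: "h (d*p) = d" using p0 by (simp add: h_def)
    have mue: "mu (d*p) = - s" using mu_mult_prime[OF p d0 False] d by simp
    have pk: "p * p dvd k"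
    proof -
      have "coprime (p*p) d" using False p by (metis coprime_commute coprime_mult_left_iff prime_imp_coprime)
      moreover have "p * p dvd d * k" using p2 k by (simp add: power2_eq_square)
      ultimately show ?thesis using coprime_dvd_mult_right_iff by blast
    qed
    then obtain j where j: "k = p * j" using dvd_mult_left by blast
    have j0: "j > 0" using j k0 by (cases j) auto
    have pj: "p dvd j" using pk j p0 by simp
    have "n div (d*p) = j" using k j d0 p0 by simp
    moreover have "n div d = p * j" using k j d0 by simp
    ultimately have X: "a (n div (d*p)) = a (n div d)" using ap[OF p pj j0] by simp
    have Y: "d * p dvd n" using k j by simp
    show ?thesis unfolding hd hhd mue using X Y by blast
  qed
qed

lemma nonsqf_case:
  fixes a :: "nat \<Rightarrow> int"
  assumes ap: "\<And>q m. prime q \<Longrightarrow> q dvd m \<Longrightarrow> m > 0 \<Longrightarrow> a (q*m) = a m"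
    and p: "prime p" and n: "n \<ge> 1" and p2: "p^2 dvd n"
  shows "A_plus a n = A_minus a n"
proof -
  define h where "h = (\<lambda>d::nat. if p dvd d then d div p else d*p)"
  note st = nonsqf_step[OF ap p n p2 _ _ _ h_def]
  show ?thesis unfolding A_plus_def A_minus_def
  proof (rule prod.reindex_bij_witness[where i = h and j = h])
    fix d assume "d \<in> {d. d dvd n \<and> mu d = 1}"
    then have dd: "d dvd n" "mu d = 1" by simp_all
    have "h d dvd n \<and> mu (h d) = - 1 \<and> h (h d) = d \<and> a (n div h d) = a (n div d)"
      by (rule st[of 1 d]) (simp_all only: dd simp_thms)
    then show "h (h d) = d" "h d \<in> {d. d dvd n \<and> mu d = -1}" "a (n div h d) = a (n div d)"
      by simp_all
  next
    fix d assume "d \<in> {d. d dvd n \<and> mu d = -1}"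
    then have dd: "d dvd n" "mu d = -1" by simp_all
    have "h d dvd n \<and> mu (h d) = - (-1) \<and> h (h d) = d \<and> a (n div h d) = a (n div d)"
      by (rule st[of "-1" d]) (simp_all only: dd simp_thms)
    then show "h (h d) = d" "h d \<in> {d. d dvd n \<and> mu d = 1}"
      by simp_all
  qed
qed

lemma ddc: "(p::nat) dvd n \<Longrightarrow> n > 0 \<Longrightarrow> n div (n div p) = p"
  by (metis div_mult_self1_is_m dvd_div_mult_self mult_eq_0_iff neq0_conv dvd_mult_div_cancel)

lemma sqf_case:
  fixes a :: "nat \<Rightarrow> int"
  assumes a1: "a 1 = 0" and ap: "\<And>p. prime p \<Longrightarrow> int p dvd a p"
    and n: "n > 1" and sq: "squarefree n" and s: "s = 1 \<or> s = -1"
  shows "int n dvd (\<Prod>d\<in>{d. d dvd n \<and> mu d = s}. a (n div d))"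
proof (cases "mu n = s")
  case True
  then have mem: "n \<in> {d. d dvd n \<and> mu d = s}" by simp
  have fin: "finite {d. d dvd n \<and> mu d = s}" using n by simp
  have "(\<Prod>d\<in>{d. d dvd n \<and> mu d = s}. a (n div d)) = 0"
    by (intro prod_zero[OF fin] bexI[of _ n]) (use mem a1 n in auto)
  then show ?thesis by simp
next
  case False
  then have mun: "mu n = - s" using mu_pm[OF sq] s by auto
  let ?S = "{d. d dvd n \<and> mu d = s}"
  have fin: "finite ?S" using n by simp
  have sub: "(\<lambda>p. n div p) ` prime_factors n \<subseteq> ?S"
  proof
    fix x assume "x \<in> (\<lambda>p. n div p) ` prime_factors n"
    then obtain p where p: "p \<in> prime_factors n" "x = n div p" by blast
    have pp: "prime p" "p dvd n" using p by (auto simp: prime_factors_dvd)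
    then obtain m where m: "n = m * p" by (metis dvd_def mult.commute)
    have m0: "m > 0" using m n by (cases m) auto
    have pm: "\<not> p dvd m"
    proof
      assume "p dvd m"
      then have "p^2 dvd n" using m by (auto simp: power2_eq_square)
      then have "p dvd 1" using sq squarefreeD by blast
      then show False using pp by auto
    qed
    have "mu n = - mu m" using mu_mult_prime[OF pp(1) m0 pm] m by simp
    then have "mu m = s" using mun by simp
    moreover have "x = m" using p(2) m pp(1) prime_gt_0_nat by simp
    moreover have "m dvd n" using m by simp
    ultimately show "x \<in> ?S" by simp
  qed
  have inj: "inj_on (\<lambda>p. n div p) (prime_factors n)"
  proof (rule inj_onI)
    fix p q assume pq: "p \<in> prime_factors n" "q \<in> prime_factors n" "n div p = n div q"
    have "p dvd n" using pq(1) by blast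
    moreover have "q dvd n" using pq(2) by blast
    ultimately have "p = n div (n div p)" "q = n div (n div q)" using n ddc by simp_all
    then show "p = q" using pq(3) by simp
  qed
  have eqA: "(\<Prod>p\<in>prime_factors n. a (n div (n div p))) = (\<Prod>p\<in>prime_factors n. a p)"
  proof (intro prod.cong refl)
    fix p assume "p \<in> prime_factors n"
    then have "p dvd n" by blast
    then show "a (n div (n div p)) = a p" using n ddc by simp
  qed
  have "(\<Prod>p\<in>prime_factors n. a p) = (\<Prod>p\<in>prime_factors n. a (n div (n div p)))"
    using eqA by (rule sym)
  also have "\<dots> = (\<Prod>d\<in>(\<lambda>p. n div p) ` prime_factors n. a (n div d))"
    using prod.reindex[OF inj, of "\<lambda>d. a (n div d)"] unfolding comp_def by (rule sym)
  also have "\<dots> dvd (\<Prod>d\<in>?S. a (n div d))"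
    by (rule prod_dvd_prod_subset[OF fin sub])
  finally have 1: "(\<Prod>p\<in>prime_factors n. a p) dvd (\<Prod>d\<in>?S. a (n div d))" .
  have "int n = int (\<Prod>p\<in>prime_factors n. p)" by (simp only: sqf_prod_pf[OF sq])
  also have "\<dots> = (\<Prod>p\<in>prime_factors n. int p)" by (rule of_nat_prod)
  also have "\<dots> dvd (\<Prod>p\<in>prime_factors n. a p)"
  proof (rule prod_dvd_prod)
    fix p assume "p \<in> prime_factors n"
    then have "prime p" by (rule in_prime_factors_imp_prime)
    then show "int p dvd a p" by (rule ap)
  qed
  finally show ?thesis using 1 by (rule dvd_trans)
qed

lemma eg_crit:
  fixes a :: "nat \<Rightarrow> int"
  assumes ar: "\<And>q m. prime q \<Longrightarrow> q dvd m \<Longrightarrow> m > 0 \<Longrightarrow> a (q*m) = a m"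
    and a1: "a 1 = 0" and ap: "\<And>p. prime p \<Longrightarrow> int p dvd a p"
  shows "euler_gauss a"
  unfolding euler_gauss_def
proof (intro allI impI)
  fix n :: nat assume n: "n \<ge> 1"
  have n0: "n \<noteq> 0" using n by simp
  show "[A_plus a n = A_minus a n] (mod int n)"
  proof (cases "squarefree n")
    case False
    then obtain p where p: "prime p" "p^2 dvd n"
      using squarefree_factorial_semiring[OF n0] by blast
    have "A_plus a n = A_minus a n" by (rule nonsqf_case[OF ar p(1) n p(2)])
    then show ?thesis by (simp only: cong_refl)
  next
    case True
    show ?thesis
    proof (cases "n = 1")
      case True then show ?thesis by simp
    next
      case False
      then have gt: "n > 1" using n by simp
      have "int n dvd A_plus a n" unfolding A_plus_def using sqf_case[OF a1 ap gt True, of 1] by simp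
      moreover have "int n dvd A_minus a n" unfolding A_minus_def using sqf_case[OF a1 ap gt True, of "-1"] by simp
      ultimately show ?thesis unfolding cong_def by (simp only: dvd_imp_mod_0)
    qed
  qed
qed



lemma rad_mult_prime:
  assumes "prime (q::nat)" "q dvd m" "m > 0"
  shows "prime_factors (q*m) = prime_factors m" "rad (q*m) = rad m"
proof -
  have q0: "q \<noteq> 0" using assms(1) by auto
  have "q \<in> prime_factors m" using assms by (auto simp: prime_factors_dvd)
  then show pf: "prime_factors (q*m) = prime_factors m"
    using assms q0 by (subst prime_factors_product) (auto simp: prime_factorization_prime)
  show "rad (q*m) = rad m" unfolding rad_def pf ..
qed

lemma sqdiv':
  assumes q: "prime (q::nat)" and qm: "q dvd m" and m: "m > 0"
  shows "(d dvd q*m \<and> squarefree d) = (d dvd m \<and> squarefree d)"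
proof (intro iffI)
  assume "d dvd m \<and> squarefree d"
  then show "d dvd q*m \<and> squarefree d" by auto
next
  assume "d dvd q*m \<and> squarefree d"
  then have dq: "d dvd q*m" and sq: "squarefree d" by auto
  have "d dvd m"
  proof (cases "q dvd d")
    case False
    then have "coprime d q" using q by (metis coprime_commute prime_imp_coprime)
    then show ?thesis using dq coprime_dvd_mult_right_iff by (metis mult.commute)
  next
    case True
    then obtain e where e: "d = q * e" by blast
    have ne: "\<not> q dvd e"
    proof
      assume "q dvd e"
      then have "q^2 dvd d" using e by (auto simp: power2_eq_square)
      then have "q dvd 1" using sq squarefreeD by blast
      then show False using q by auto
    qed
    have "e dvd m" using dq e q by (simp add: prime_gt_0_nat)
    moreover have "coprime e q" using ne q by (metis coprime_commute prime_imp_coprime)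
    ultimately have "e * q dvd m" using qm divides_mult by blast
    then show ?thesis using e by (simp add: mult.commute)
  qed
  then show "d dvd m \<and> squarefree d" using sq by simp
qed

lemma sqdiv:
  assumes q: "prime (q::nat)" and qm: "q dvd m" and m: "m > 0"
  shows "{d. d dvd q*m \<and> squarefree d} = {d. d dvd m \<and> squarefree d}"
  using sqdiv'[OF q qm m] by blast

lemma part1:
  fixes g :: "nat \<Rightarrow> nat \<Rightarrow> int"
  assumes g1: "\<forall>n\<ge>1. g 1 n = 0" and gr: "\<forall>n\<ge>1. \<forall>d. d dvd n \<longrightarrow> g d n = g d (rad n)"
  shows "euler_gauss (\<lambda>n. \<Sum>d\<in>{d. d dvd n}. int d * mu d * g d n)"
proof (rule eg_crit)
  define a where "a = (\<lambda>n. \<Sum>d\<in>{d. d dvd n}. int d * mu d * g d n)"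
  have red: "a n = (\<Sum>d\<in>{d. d dvd n \<and> squarefree d}. int d * mu d * g d (rad n))" if n: "n > 0" for n
  proof -
    have fin: "finite {d. d dvd n}" using n by simp
    have "a n = (\<Sum>d\<in>{d. d dvd n \<and> squarefree d}. int d * mu d * g d n)"
      unfolding a_def
      by (rule sum.mono_neutral_right[OF fin]) (auto simp: mu_nonsqf)
    also have "\<dots> = (\<Sum>d\<in>{d. d dvd n \<and> squarefree d}. int d * mu d * g d (rad n))"
      using gr n by (intro sum.cong refl) auto
    finally show ?thesis .
  qed
  fix q m :: nat assume q: "prime q" and qm: "q dvd m" and m: "0 < m"
  have qm0: "q * m > 0" using q m prime_gt_0_nat by simp
  show "a (q*m) = a m" unfolding red[OF qm0] red[OF m] sqdiv[OF q qm m] rad_mult_prime[OF q qm m] ..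
next
  show "(\<Sum>d\<in>{d. d dvd 1}. int d * mu d * g d 1) = 0" using g1 by simp
next
  fix p :: nat assume p: "prime p"
  have "{d. d dvd p} = {1, p}" using p by (auto simp: prime_nat_iff)
  moreover have "p \<noteq> 1" using p by auto
  ultimately have "(\<Sum>d\<in>{d. d dvd p}. int d * mu d * g d p) = int p * (mu p * g p p)"
    using g1 prime_ge_1_nat[OF p] p prime_gt_0_nat by simp
  then show "int p dvd (\<Sum>d\<in>{d. d dvd p}. int d * mu d * g d p)" by simp
qed

lemma part2:
  fixes f :: "nat \<Rightarrow> nat \<Rightarrow> int"
  shows "euler_gauss (\<lambda>n. \<Sum>p\<in>prime_factors n. int p * f p (rad n))"
proof (rule eg_crit)
  fix q m :: nat assume q: "prime q" and qm: "q dvd m" and m: "0 < m"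
  show "(\<Sum>p\<in>prime_factors (q*m). int p * f p (rad (q*m))) = (\<Sum>p\<in>prime_factors m. int p * f p (rad m))"
    unfolding rad_mult_prime[OF q qm m] ..
next
  show "(\<Sum>p\<in>prime_factors 1. int p * f p (rad 1)) = 0" by simp
next
  fix p :: nat assume p: "prime p"
  have "prime_factors p = {p}" using p by (simp add: prime_factorization_prime)
  then show "int p dvd (\<Sum>q\<in>prime_factors p. int q * f q (rad p))" by simp
qed

theorem corollary1:
  shows "(\<forall>g :: nat \<Rightarrow> nat \<Rightarrow> int.
            (\<forall>n\<ge>1. g 1 n = 0) \<and> (\<forall>n\<ge>1. \<forall>d. d dvd n \<longrightarrow> g d n = g d (rad n))
            \<longrightarrow> euler_gauss (\<lambda>n. \<Sum>d\<in>{d. d dvd n}. int d * mu d * g d n))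
       \<and> (\<forall>f :: nat \<Rightarrow> nat \<Rightarrow> int.
            euler_gauss (\<lambda>n. \<Sum>p\<in>prime_factors n. int p * f p (rad n)))"
  using part1 part2 by blast

end
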